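(* For every $n\ge2$, consider all plane trees on $n$ vertices and, in each, all pairs $(u,w)$ of vertices with $w$ a proper descendant of $u$ (downward paths). Then: - the total number of such pairs is $\frac12\bigl(4^{n-1}-\binom{2n-2}{n-1}\bigr)$; - the total of $d(u,w)$ over all such pairs is $\frac{(2n-3)!}{((n-2)!)^2}$, which also equals $\binom n2 c_{n-1}$. Hence the expected length of a uniformly random downward path in a uniformly random plane tree on $n$ vertices is $$\frac{n-1}{\frac{(2n-2)!!}{(2n-3)!!}-1}=\sqrt{\frac n\pi}+\frac1\pi+O\Bigl(\frac1{\sqrt n}\Bigr).$$
   Context: General (plane) trees are rooted trees in which each vertex may have any number of children, linearly ordered. The size of a tree is its number of vertices. $d(u,w)$ is the number of edges of the path between $u$ and $w$. $c_{m}=\frac1{m+1}\binom{2m}{m}$ is the $m$th Catalan number; $c_{n-1}$ is the number of plane trees on $n$ vertices. The double factorials are $(2m)!!=2\cdot4\cdots(2m)$ and $(2m-1)!!=1\cdot3\cdots(2m-1)$. *)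

theory Defs
  imports Complex_Main "HOL-Library.Sublist" "HOL-Library.Landau_Symbols"
begin

datatype ptree = Node "ptree list"

fun tsize :: "ptree \<Rightarrow> nat" where
  "tsize (Node ts) = Suc (sum_list (map tsize ts))"

text \<open>Vertices of a tree are identified with their positions (Dewey addresses):
  the root is [], and i # p is vertex p of the i-th child subtree.\<close>
inductive is_pos :: "ptree \<Rightarrow> nat list \<Rightarrow> bool" where
  root: "is_pos t []"
| child: "i < length ts \<Longrightarrow> is_pos (ts ! i) p \<Longrightarrow> is_pos (Node ts) (i # p)"

definition vertices :: "ptree \<Rightarrow> nat list set" where
  "vertices t = {p. is_pos t p}"

definition trees :: "nat \<Rightarrow> ptree set" where
  "trees n = {t. tsize t = n}"

definition down_pairs :: "ptree \<Rightarrow> (nat list \<times> nat list) set" where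
  "down_pairs t = {(u, w). u \<in> vertices t \<and> w \<in> vertices t \<and> strict_prefix u w}"

definition dist_down :: "nat list \<Rightarrow> nat list \<Rightarrow> nat" where
  "dist_down u w = length w - length u"

definition total_pairs :: "nat \<Rightarrow> nat" where
  "total_pairs n = (\<Sum>t\<in>trees n. card (down_pairs t))"

definition total_dist :: "nat \<Rightarrow> nat" where
  "total_dist n = (\<Sum>t\<in>trees n. \<Sum>(u, w)\<in>down_pairs t. dist_down u w)"

text \<open>Expected length of a uniformly random downward path among all downward paths
  of all plane trees on n vertices.\<close>
definition expected_len :: "nat \<Rightarrow> real" where
  "expected_len n = real (total_dist n) / real (total_pairs n)"

fun dfact :: "nat \<Rightarrow> nat" where
  "dfact 0 = 1"
| "dfact (Suc 0) = 1"
| "dfact (Suc (Suc n)) = Suc (Suc n) * dfact n"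

definition catalan :: "nat \<Rightarrow> real" where
  "catalan m = real ((2 * m) choose m) / real (m + 1)"

end

theory Submission
  imports Defs "HOL-Computational_Algebra.Formal_Power_Series" "HOL-Analysis.Analysis"
begin

lemma tsize_pos: "tsize t \<ge> 1"
  by (cases t) auto

lemma vertices_Node:
  "vertices (Node ts) = insert [] (\<Union>i<length ts. (Cons i) ` vertices (ts ! i))"
  unfolding vertices_def
proof (intro set_eqI iffI)
  fix x assume "x \<in> {p. is_pos (Node ts) p}"
  then have "is_pos (Node ts) x" by simp
  then show "x \<in> insert [] (\<Union>i<length ts. (Cons i) ` {p. is_pos (ts ! i) p})"
    by (cases rule: is_pos.cases) auto
qed (auto intro: is_pos.intros)

lemma finite_vertices: "finite (vertices t)"
proof (induction t)
  case (Node ts)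
  then show ?case by (simp add: vertices_Node)
qed

lemma sum_vertices_Node:
  fixes g :: "nat list \<Rightarrow> 'a::comm_monoid_add"
  shows "(\<Sum>p\<in>vertices (Node ts). g p) = g [] + (\<Sum>i<length ts. \<Sum>p\<in>vertices (ts!i). g (i # p))"
proof -
  have "(\<Sum>p\<in>vertices (Node ts). g p) = g [] + (\<Sum>p\<in>(\<Union>i<length ts. (Cons i) ` vertices (ts ! i)). g p)"
    unfolding vertices_Node
    by (subst sum.insert) (auto simp: finite_vertices)
  also have "(\<Sum>p\<in>(\<Union>i<length ts. (Cons i) ` vertices (ts ! i)). g p)
     = (\<Sum>i<length ts. \<Sum>p\<in>(Cons i) ` vertices (ts ! i). g p)"
    by (rule sum.UNION_disjoint) (auto simp: finite_vertices)
  also have "\<dots> = (\<Sum>i<length ts. \<Sum>p\<in>vertices (ts!i). g (i # p))"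
    by (rule sum.cong[OF refl], subst sum.reindex) auto
  finally show ?thesis .
qed

lemma down_pairs_Node:
  "down_pairs (Node ts) = (\<lambda>w. ([], w)) ` (vertices (Node ts) - {[]})
     \<union> (\<Union>i<length ts. (\<lambda>(p,q). (i # p, i # q)) ` down_pairs (ts ! i))"
proof -
  have "x \<in> down_pairs (Node ts) \<longleftrightarrow> x \<in> (\<lambda>w. ([], w)) ` (vertices (Node ts) - {[]})
     \<union> (\<Union>i<length ts. (\<lambda>(p,q). (i # p, i # q)) ` down_pairs (ts ! i))" for x
  proof (cases x)
    case (Pair u w)
    show ?thesis
    proof (cases u)
      case Nil
      then show ?thesis using Pair
        by (auto simp: down_pairs_def vertices_def strict_prefix_def intro: is_pos.root)
    next
      case (Cons i p)
      show ?thesis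
      proof
        assume "x \<in> down_pairs (Node ts)"
        then have uv: "is_pos (Node ts) (i#p)" "is_pos (Node ts) w" "strict_prefix (i#p) w"
          using Pair Cons by (auto simp: down_pairs_def vertices_def)
        then obtain q where w: "w = i # q" "strict_prefix p q"
          by (cases w) (auto simp: strict_prefix_def)
        from uv w have "i < length ts" "is_pos (ts!i) p" "is_pos (ts!i) q"
          by (auto elim: is_pos.cases)
        then show "x \<in> (\<lambda>w. ([], w)) ` (vertices (Node ts) - {[]})
     \<union> (\<Union>i<length ts. (\<lambda>(p,q). (i # p, i # q)) ` down_pairs (ts ! i))"
          using Pair Cons w by (force simp: down_pairs_def vertices_def)
      next
        assume "x \<in> (\<lambda>w. ([], w)) ` (vertices (Node ts) - {[]})
     \<union> (\<Union>i<length ts. (\<lambda>(p,q). (i # p, i # q)) ` down_pairs (ts ! i))"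
        then show "x \<in> down_pairs (Node ts)"
          using Pair Cons by (auto simp: down_pairs_def vertices_def strict_prefix_def intro: is_pos.intros)
      qed
    qed
  qed
  then show ?thesis by blast
qed

lemma finite_down_pairs: "finite (down_pairs t)"
proof -
  have "down_pairs t \<subseteq> vertices t \<times> vertices t" by (auto simp: down_pairs_def)
  then show ?thesis using finite_vertices finite_subset by blast
qed

lemma sum_down_pairs_Node:
  fixes h :: "nat list \<Rightarrow> nat list \<Rightarrow> 'a::comm_monoid_add"
  shows "(\<Sum>(u,w)\<in>down_pairs (Node ts). h u w) =
     (\<Sum>w\<in>vertices (Node ts) - {[]}. h [] w) + (\<Sum>i<length ts. \<Sum>(p,q)\<in>down_pairs (ts!i). h (i#p) (i#q))"
proof -
  have fin: "finite (\<Union>i<length ts. (\<lambda>(p,q). (i # p, i # q)) ` down_pairs (ts ! i))"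
    by (auto simp: finite_down_pairs)
  have "(\<Sum>(u,w)\<in>down_pairs (Node ts). h u w) =
     (\<Sum>(u,w)\<in>(\<lambda>w. ([], w)) ` (vertices (Node ts) - {[]}). h u w) +
     (\<Sum>(u,w)\<in>(\<Union>i<length ts. (\<lambda>(p,q). (i # p, i # q)) ` down_pairs (ts ! i)). h u w)"
    unfolding down_pairs_Node
    by (rule sum.union_disjoint) (auto simp: finite_vertices finite_down_pairs)
  also have "(\<Sum>(u,w)\<in>(\<lambda>w. ([], w)) ` (vertices (Node ts) - {[]}). h u w) = (\<Sum>w\<in>vertices (Node ts) - {[]}. h [] w)"
    by (subst sum.reindex) (auto simp: inj_on_def)
  also have "(\<Sum>(u,w)\<in>(\<Union>i<length ts. (\<lambda>(p,q). (i # p, i # q)) ` down_pairs (ts ! i)). h u w)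
     = (\<Sum>i<length ts. \<Sum>(u,w)\<in>(\<lambda>(p,q). (i # p, i # q)) ` down_pairs (ts ! i). h u w)"
    by (rule sum.UNION_disjoint) (auto simp: finite_down_pairs)
  also have "\<dots> = (\<Sum>i<length ts. \<Sum>(p,q)\<in>down_pairs (ts!i). h (i#p) (i#q))"
    by (rule sum.cong[OF refl], subst sum.reindex) (auto simp: inj_on_def case_prod_beta)
  finally show ?thesis .
qed

fun PP :: "ptree \<Rightarrow> nat" where
  "PP (Node ts) = sum_list (map (\<lambda>t. tsize t + PP t) ts)"

fun DD :: "ptree \<Rightarrow> nat" where
  "DD (Node ts) = sum_list (map (\<lambda>t. DD t + PP t + tsize t) ts)"

lemma sum_list_map_nth: "sum_list (map f ts) = (\<Sum>i<length ts. f (ts ! i))"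
  by (simp add: sum_list_sum_nth atLeast0LessThan)

lemma sum_vertices_Node':
  fixes g :: "nat list \<Rightarrow> 'a::ab_group_add"
  shows "(\<Sum>p\<in>vertices (Node ts) - {[]}. g p) = (\<Sum>i<length ts. \<Sum>p\<in>vertices (ts!i). g (i # p))"
proof -
  have "[] \<in> vertices (Node ts)" by (simp add: vertices_Node)
  then have "(\<Sum>p\<in>vertices (Node ts). g p) = g [] + (\<Sum>p\<in>vertices (Node ts) - {[]}. g p)"
    by (simp add: sum.remove finite_vertices)
  then show ?thesis using sum_vertices_Node[of g ts] by simp
qed

lemma card_vertices: "card (vertices t) = tsize t"
proof (induction t)
  case (Node ts)
  have "card (vertices (Node ts)) = (\<Sum>p\<in>vertices (Node ts). (1::nat))" by simp
  also have "\<dots> = 1 + (\<Sum>i<length ts. tsize (ts!i))"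
    using Node by (subst sum_vertices_Node) simp
  finally show ?case by (simp add: sum_list_map_nth)
qed

lemma depth_sum: "(\<Sum>p\<in>vertices t. length p) = PP t"
proof (induction t)
  case (Node ts)
  have "(\<Sum>p\<in>vertices (Node ts). length p) = (\<Sum>i<length ts. \<Sum>p\<in>vertices (ts!i). Suc (length p))"
    by (subst sum_vertices_Node) simp
  also have "\<dots> = (\<Sum>i<length ts. tsize (ts!i) + PP (ts!i))"
  proof (rule sum.cong[OF refl])
    fix i assume "i \<in> {..<length ts}"
    then have "ts ! i \<in> set ts" by simp
    have "(\<Sum>p\<in>vertices (ts!i). Suc (length p)) = (\<Sum>p\<in>vertices (ts!i). 1 + length p)" by simp
    also have "\<dots> = tsize (ts!i) + PP (ts!i)"
      using Node.IH[OF \<open>ts ! i \<in> set ts\<close>] by (simp only: sum.distrib) (simp add: card_vertices)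
    finally show "(\<Sum>p\<in>vertices (ts!i). Suc (length p)) = tsize (ts!i) + PP (ts!i)" .
  qed
  finally show ?case by (simp add: sum_list_map_nth)
qed

lemma card_down_pairs: "card (down_pairs t) = PP t"
proof (induction t)
  case (Node ts)
  have "card (down_pairs (Node ts)) = (\<Sum>(u,w)\<in>down_pairs (Node ts). (1::int))"
    by simp
  also have "\<dots> = (\<Sum>w\<in>vertices (Node ts) - {[]}. 1) + (\<Sum>i<length ts. \<Sum>(p,q)\<in>down_pairs (ts!i). (1::int))"
    by (rule sum_down_pairs_Node)
  also have "\<dots> = (\<Sum>i<length ts. int (tsize (ts!i)) + int (PP (ts!i)))"
    using Node by (subst sum_vertices_Node') (simp add: sum.distrib card_vertices case_prod_beta)
  finally have "int (card (down_pairs (Node ts))) = int (\<Sum>i<length ts. tsize (ts!i) + PP (ts!i))"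
    by simp
  then show ?case by (simp add: sum_list_map_nth del: of_nat_sum)
qed

lemma dist_sum: "(\<Sum>(u,w)\<in>down_pairs t. dist_down u w) = DD t"
proof (induction t)
  case (Node ts)
  have "int (\<Sum>(u,w)\<in>down_pairs (Node ts). dist_down u w) = (\<Sum>(u,w)\<in>down_pairs (Node ts). int (dist_down u w))"
    by (simp add: case_prod_beta)
  also have "\<dots> = (\<Sum>w\<in>vertices (Node ts) - {[]}. int (dist_down [] w)) + (\<Sum>i<length ts. \<Sum>(p,q)\<in>down_pairs (ts!i). int (dist_down (i#p) (i#q)))"
    by (rule sum_down_pairs_Node)
  also have "\<dots> = (\<Sum>i<length ts. \<Sum>p\<in>vertices (ts!i). int (Suc (length p))) + (\<Sum>i<length ts. int (\<Sum>(p,q)\<in>down_pairs (ts!i). dist_down p q))"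
    by (simp add: sum_vertices_Node' dist_down_def case_prod_beta)
  also have "\<dots> = (\<Sum>i<length ts. int (tsize (ts!i)) + int (PP (ts!i))) + (\<Sum>i<length ts. int (DD (ts!i)))"
    using Node by (simp add: sum.distrib card_vertices flip: depth_sum)
  finally have "int (\<Sum>(u,w)\<in>down_pairs (Node ts). dist_down u w) = int (\<Sum>i<length ts. DD (ts!i) + PP (ts!i) + tsize (ts!i))"
    by (simp add: sum.distrib)
  then show ?case by (simp add: sum_list_map_nth del: of_nat_sum)
qed

definition cns :: "ptree \<Rightarrow> ptree \<Rightarrow> ptree" where
  "cns a t = (case t of Node ts \<Rightarrow> Node (a # ts))"

lemma tsize_cns: "tsize (cns a b) = tsize a + tsize b"
  by (cases b) (simp add: cns_def)
lemma PP_cns: "PP (cns a b) = tsize a + PP a + PP b"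
  by (cases b) (simp add: cns_def)
lemma DD_cns: "DD (cns a b) = DD a + PP a + tsize a + DD b"
  by (cases b) (simp add: cns_def)

lemma cns_inj: "cns a b = cns a' b' \<Longrightarrow> a = a' \<and> b = b'"
  by (cases b; cases b') (auto simp: cns_def)

lemma trees_0: "trees 0 = {}"
proof -
  have "tsize t \<noteq> 0" for t using tsize_pos[of t] by simp
  then show ?thesis by (auto simp: trees_def)
qed

lemma trees_1: "trees 1 = {Node []}"
proof -
  have "tsize t = 1 \<longleftrightarrow> t = Node []" for t
  proof (cases t)
    case (Node ts)
    have "tsize (Node ts) = 1 \<longleftrightarrow> ts = []"
    proof
      assume "tsize (Node ts) = 1"
      then have "sum_list (map tsize ts) = 0" by simp
      then show "ts = []" using tsize_pos[of "hd ts"] by (cases ts) auto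
    qed simp
    then show ?thesis using Node by simp
  qed
  then show ?thesis by (auto simp: trees_def)
qed

lemma trees_Suc0: "trees (Suc 0) = {Node []}" using trees_1 by simp

lemma trees_decomp:
  assumes "n \<ge> 2"
  shows "trees n = (\<Union>k\<in>{1..n-1}. (\<lambda>(a,b). cns a b) ` (trees k \<times> trees (n-k)))"
proof (intro set_eqI iffI)
  fix t assume "t \<in> trees n"
  then have ts: "tsize t = n" by (simp add: trees_def)
  obtain ts where t: "t = Node ts" by (cases t)
  show "t \<in> (\<Union>k\<in>{1..n-1}. (\<lambda>(a,b). cns a b) ` (trees k \<times> trees (n-k)))"
  proof (cases ts)
    case Nil
    then show ?thesis using ts t assms by simp
  next
    case (Cons a rest)
    have e: "t = cns a (Node rest)" using t Cons by (simp add: cns_def)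
    have s: "tsize a + tsize (Node rest) = n" using ts e tsize_cns by metis
    have "tsize a \<ge> 1" "tsize (Node rest) \<ge> 1" by (rule tsize_pos)+
    then have "tsize a \<in> {1..n-1}" "tsize (Node rest) = n - tsize a" using s by auto
    then show ?thesis using e by (auto simp: trees_def intro!: bexI[of _ "tsize a"] image_eqI[of _ _ "(a, Node rest)"])
  qed
next
  fix t assume "t \<in> (\<Union>k\<in>{1..n-1}. (\<lambda>(a,b). cns a b) ` (trees k \<times> trees (n-k)))"
  then show "t \<in> trees n" using assms by (auto simp: trees_def tsize_cns)
qed

lemma finite_trees: "finite (trees n)"
proof (induction n rule: less_induct)
  case (less n)
  consider "n = 0" | "n = 1" | "n \<ge> 2" by linarith
  then show ?case
  proof cases
    case 3
    then show ?thesis using less by (subst trees_decomp) auto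
  next
    case 2
    then have "trees n = {Node []}" using trees_1 by simp
    then show ?thesis by simp
  qed (auto simp: trees_0)
qed

lemma sum_trees_decomp:
  fixes f :: "ptree \<Rightarrow> real"
  assumes "n \<ge> 2"
  shows "(\<Sum>t\<in>trees n. f t) = (\<Sum>k=1..n-1. \<Sum>a\<in>trees k. \<Sum>b\<in>trees (n-k). f (cns a b))"
proof -
  have "(\<Sum>t\<in>trees n. f t) = (\<Sum>k=1..n-1. \<Sum>t\<in>(\<lambda>(a,b). cns a b) ` (trees k \<times> trees (n-k)). f t)"
    unfolding trees_decomp[OF assms]
  proof (rule sum.UNION_disjoint)
    show "\<forall>i\<in>{1..n - 1}. \<forall>j\<in>{1..n - 1}. i \<noteq> j \<longrightarrow>
        (\<lambda>(a,b). cns a b) ` (trees i \<times> trees (n - i)) \<inter> (\<lambda>(a,b). cns a b) ` (trees j \<times> trees (n - j)) = {}"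
      by (auto simp: trees_def dest!: cns_inj)
  qed (auto simp: finite_trees)
  also have "\<dots> = (\<Sum>k=1..n-1. \<Sum>(a,b)\<in>trees k \<times> trees (n-k). f (cns a b))"
    by (rule sum.cong[OF refl], subst sum.reindex) (auto simp: inj_on_def case_prod_unfold dest: cns_inj)
  also have "\<dots> = (\<Sum>k=1..n-1. \<Sum>a\<in>trees k. \<Sum>b\<in>trees (n-k). f (cns a b))"
    by (rule sum.cong[OF refl], rule sum.cartesian_product[symmetric])
  finally show ?thesis .
qed

definition cN :: "nat \<Rightarrow> real" where "cN n = (\<Sum>t\<in>trees n. 1)"
definition aN :: "nat \<Rightarrow> real" where "aN n = (\<Sum>t\<in>trees n. real (PP t))"
definition dN :: "nat \<Rightarrow> real" where "dN n = (\<Sum>t\<in>trees n. real (DD t))"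

lemma double_sum_split:
  fixes F G :: "'a \<Rightarrow> real"
  shows "(\<Sum>a\<in>A. \<Sum>b\<in>B. F a + G b) = sum F A * (\<Sum>b\<in>B. 1) + (\<Sum>a\<in>A. 1) * sum G B"
  by (simp add: sum.distrib sum_distrib_left sum_distrib_right mult.commute)

lemma sum_trees_size: "(\<Sum>t\<in>trees k. f (tsize t) t) = (\<Sum>t\<in>trees k. f k t)"
  by (rule sum.cong) (auto simp: trees_def)

lemma cN_rec: "n \<ge> 2 \<Longrightarrow> cN n = (\<Sum>k=1..n-1. cN k * cN (n-k))"
  unfolding cN_def by (subst sum_trees_decomp) auto

lemma aN_rec: "n \<ge> 2 \<Longrightarrow> aN n = (\<Sum>k=1..n-1. aN k * cN (n-k) + real k * cN k * cN (n-k) + cN k * aN (n-k))"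
proof -
  assume n: "n \<ge> 2"
  have "aN n = (\<Sum>k=1..n-1. \<Sum>a\<in>trees k. \<Sum>b\<in>trees (n-k). (real (tsize a) + real (PP a)) + real (PP b))"
    unfolding aN_def by (subst sum_trees_decomp[OF n]) (simp add: PP_cns add.assoc)
  also have "\<dots> = (\<Sum>k=1..n-1. \<Sum>a\<in>trees k. \<Sum>b\<in>trees (n-k). (real k + real (PP a)) + real (PP b))"
    by (rule sum.cong[OF refl], rule sum.cong) (auto simp: trees_def)
  also have "\<dots> = (\<Sum>k=1..n-1. aN k * cN (n-k) + real k * cN k * cN (n-k) + cN k * aN (n-k))"
    by (rule sum.cong[OF refl], subst double_sum_split) (simp add: aN_def cN_def sum.distrib algebra_simps)
  finally show ?thesis .
qed

lemma dN_rec: "n \<ge> 2 \<Longrightarrow> dN n = (\<Sum>k=1..n-1. (dN k + aN k + real k * cN k) * cN (n-k) + cN k * dN (n-k))"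
proof -
  assume n: "n \<ge> 2"
  have "dN n = (\<Sum>k=1..n-1. \<Sum>a\<in>trees k. \<Sum>b\<in>trees (n-k). (real (DD a) + real (PP a) + real (tsize a)) + real (DD b))"
    unfolding dN_def by (subst sum_trees_decomp[OF n]) (simp add: DD_cns add.assoc)
  also have "\<dots> = (\<Sum>k=1..n-1. \<Sum>a\<in>trees k. \<Sum>b\<in>trees (n-k). (real (DD a) + real (PP a) + real k) + real (DD b))"
    by (rule sum.cong[OF refl], rule sum.cong) (auto simp: trees_def)
  also have "\<dots> = (\<Sum>k=1..n-1. (dN k + aN k + real k * cN k) * cN (n-k) + cN k * dN (n-k))"
    by (rule sum.cong[OF refl], subst double_sum_split) (simp add: aN_def cN_def dN_def sum.distrib algebra_simps)
  finally show ?thesis .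
qed

lemma cN_0: "cN 0 = 0" and cN_1: "cN 1 = 1" and aN_0: "aN 0 = 0" and aN_1: "aN 1 = 0"
  and dN_0: "dN 0 = 0" and dN_1: "dN 1 = 0"
  by (simp_all add: cN_def aN_def dN_def trees_0 trees_Suc0)

lemma total_pairs_eq: "real (total_pairs n) = aN n"
  by (simp add: total_pairs_def aN_def card_down_pairs)
lemma total_dist_eq: "real (total_dist n) = dN n"
  by (simp add: total_dist_def dN_def dist_sum)

lemma central_rec: "Suc k * ((2 * Suc k) choose Suc k) = 2 * (2 * k + 1) * ((2 * k) choose k)"
proof -
  define A where "A = (2*k+1) choose k"
  define c1 where "c1 = (2 * Suc k) choose Suc k"
  define c0 where "c0 = (2*k) choose k"
  have a: "(2*k+2) * A = c1 * (k+1)"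
    using Suc_times_binomial_eq[of "2*k+1" k] unfolding A_def c1_def by simp
  have c: "((2*k+1) choose (k+1)) = A"
    using binomial_symmetric[of k "2*k+1"] unfolding A_def by simp
  have b: "(2*k+1) * c0 = A * (k+1)"
    using Suc_times_binomial_eq[of "2*k" k] c unfolding c0_def by simp
  have "(k+1) * ((k+1) * c1) = (2*k+2) * (A * (k+1))" using a by (simp add: algebra_simps)
  also have "\<dots> = 2*(k+1)*((2*k+1)*c0)" using b by (simp add: algebra_simps)
  also have "\<dots> = (k+1) * (2 * (2 * k + 1) * c0)" by (simp add: algebra_simps)
  finally have "(k+1) * c1 = 2 * (2 * k + 1) * c0" by (simp only: mult_left_cancel)
  then show ?thesis unfolding c1_def c0_def by simp
qed

lemma central_gchoose: "real ((2*k) choose k) = (-4)^k * ((-1/2::real) gchoose k)"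
proof (induction k)
  case 0 then show ?case by simp
next
  case (Suc k)
  define g0 where "g0 = ((-1/2::real) gchoose k)"
  define g1 where "g1 = ((-1/2::real) gchoose Suc k)"
  define c0 where "c0 = real ((2*k) choose k)"
  define c1 where "c1 = real ((2 * Suc k) choose Suc k)"
  have m: "g0 * (-1/2) = real k * g0 + real (Suc k) * g1"
    unfolding g0_def g1_def by (rule gbinomial_mult_1')
  have r: "real (Suc k) * c1 = 2 * (2 * real k + 1) * c0"
    unfolding c0_def c1_def using central_rec[of k] by (metis (mono_tags, lifting) of_nat_1 of_nat_add of_nat_mult of_nat_numeral)
  have ih: "c0 = (-4)^k * g0" using Suc unfolding c0_def g0_def .
  have "real (Suc k) * c1 = 2*(2*real k+1)*c0" by (rule r)
  also have "\<dots> = 2*(2*real k+1)*((-4)^k*g0)" using ih by simp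
  also have "\<dots> = (-4)^k*(-4)*(- (2*real k+1)/2*g0)" by (simp add: algebra_simps)
  also have "- (2*real k+1)/2*g0 = real (Suc k) * g1" using m by (simp add: algebra_simps)
  also have "(-4)^k*(-4)*(real (Suc k) * g1) = real (Suc k) * ((-4)^(Suc k) * g1)" by (simp add: algebra_simps)
  finally have "real (Suc k) * c1 = real (Suc k) * ((-4)^(Suc k) * g1)" .
  moreover have nz: "real (Suc k) \<noteq> 0" by (simp del: of_nat_Suc)
  ultimately have "c1 = (-4)^(Suc k) * g1" using mult_left_cancel by blast
  then show ?case unfolding c1_def g1_def .
qed

definition UU :: "real fps" where "UU = Abs_fps (\<lambda>k. real ((2*k) choose k))"
definition G4 :: "real fps" where "G4 = Abs_fps (\<lambda>k. 4^k)"

lemma UU_sq: "UU * UU = G4"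
proof (rule fps_ext)
  fix n
  have "fps_nth (UU * UU) n = (\<Sum>i=0..n. (-4)^i * ((-1/2::real) gchoose i) * ((-4)^(n-i) * ((-1/2::real) gchoose (n-i))))"
    by (simp add: fps_mult_nth UU_def central_gchoose)
  also have "\<dots> = (-4)^n * (\<Sum>i=0..n. ((-1/2::real) gchoose i) * ((-1/2::real) gchoose (n-i)))"
    unfolding sum_distrib_left
  proof (rule sum.cong[OF refl])
    fix i assume "i \<in> {0..n}"
    then have eq: "(-4::real)^n = (-4)^i * (-4)^(n-i)" by (simp flip: power_add)
    show "(-4)^i * ((-1/2::real) gchoose i) * ((-4)^(n-i) * ((-1/2::real) gchoose (n-i))) =
      (-4)^n * (((-1/2::real) gchoose i) * ((-1/2::real) gchoose (n-i)))"
      unfolding eq by (simp only: mult_ac)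
  qed
  also have "\<dots> = (-4)^n * ((-1::real) gchoose n)"
    by (subst gbinomial_Vandermonde) simp
  also have "(-1::real) gchoose n = (-1)^n"
  proof -
    have e: "(real n gchoose n) = 1" using binomial_gbinomial[of n n] by simp
    have "(-1::real) gchoose n = (-1)^n * ((1 + of_nat n - 1) gchoose n)"
      by (rule gbinomial_minus)
    then show ?thesis using e by simp
  qed
  finally show "fps_nth (UU * UU) n = fps_nth G4 n"
    by (simp add: G4_def flip: power_mult_distrib)
qed

abbreviation X :: "real fps" where "X \<equiv> fps_X"
abbreviation hh :: "real fps" where "hh \<equiv> fps_const (1/2)"

definition SS :: "real fps" where "SS = (1 - 4 * X) * UU"
definition Cf :: "real fps" where "Cf = hh * (1 - SS)"
definition KK :: "real fps" where "KK = X * UU"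
definition TAf :: "real fps" where "TAf = hh * X * (G4 - UU)"
definition TDf :: "real fps" where "TDf = X^2 * (G4 * UU)"

lemma hh2: "hh * 2 = 1"
  by (simp add: numeral_fps_const fps_const_mult[symmetric])

lemma G4_geom: "G4 * (1 - 4 * X) = 1"
proof (rule fps_ext)
  fix n
  have "G4 * (1 - 4 * X) = G4 - fps_const 4 * (X * G4)" by (simp add: algebra_simps numeral_fps_const)
  then show "fps_nth (G4 * (1 - 4 * X)) n = fps_nth 1 n"
    by (cases n) (simp_all add: G4_def)
qed

lemma US: "UU * SS = 1"
proof -
  have "UU * SS = (UU * UU) * (1 - 4 * X)" by (simp add: SS_def algebra_simps)
  then show ?thesis by (simp add: UU_sq G4_geom)
qed

lemma S2: "SS * SS = 1 - 4 * X"
proof -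
  have "SS * SS = (1 - 4 * X) * (UU * SS)" by (simp add: SS_def algebra_simps)
  then show ?thesis by (simp add: US)
qed

lemma D2: "2 * Cf = 1 - SS"
  unfolding Cf_def using hh2 by (metis mult.assoc mult.commute mult_1)

lemma A2: "2 * TAf = X * (G4 - UU)"
  unfolding TAf_def using hh2 by (metis mult.assoc mult.commute mult_1)

lemma cancel4: "(4::real fps) * a = 4 * b \<Longrightarrow> a = b"
  by simp

lemma GS: "G4 * SS = UU"
proof -
  have "G4 * SS = (G4 * (1 - 4 * X)) * UU" by (simp add: SS_def algebra_simps)
  then show ?thesis by (simp add: G4_geom)
qed

lemma G4m1: "G4 - 1 = 4 * X * G4"
proof -
  have "G4 - 1 = G4 - G4 * (1 - 4 * X)" by (simp add: G4_geom)
  then show ?thesis by (simp add: algebra_simps)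
qed

lemma E1: "Cf = X + Cf * Cf"
proof (rule cancel4)
  have "4 * (X + Cf*Cf) = 4*X + (2*Cf)*(2*Cf)" by (simp add: algebra_simps)
  also have "\<dots> = 4*X + (1-SS)*(1-SS)" by (simp add: D2)
  also have "\<dots> = 4*X + 1 - 2*SS + SS*SS" by (simp add: algebra_simps)
  also have "\<dots> = 2*(1-SS)" using S2 by (simp add: algebra_simps)
  also have "\<dots> = 2*(2*Cf)" by (simp add: D2)
  also have "\<dots> = 4*Cf" by (simp add: algebra_simps)
  finally show "4 * Cf = 4 * (X + Cf * Cf)" ..
qed

lemma E2: "TAf = TAf * Cf + KK * Cf + Cf * TAf"
proof (rule cancel4)
  have "4*(TAf*Cf + KK*Cf + Cf*TAf) = 2*((2*TAf)*(2*Cf)) + 2*KK*(2*Cf)" by (simp add: algebra_simps)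
  also have "\<dots> = 2*((X*(G4-UU))*(1-SS)) + 2*(X*UU)*(1-SS)" by (simp add: A2 D2 KK_def)
  also have "\<dots> = 2*X*(G4 - G4*SS)" by (simp add: algebra_simps)
  also have "\<dots> = 2*(X*(G4-UU))" by (simp add: GS algebra_simps)
  also have "\<dots> = 2*(2*TAf)" by (simp add: A2)
  also have "\<dots> = 4*TAf" by (simp add: algebra_simps)
  finally show "4 * TAf = 4 * (TAf * Cf + KK * Cf + Cf * TAf)" ..
qed

lemma E3: "TDf = (TDf + TAf + KK) * Cf + Cf * TDf"
proof (rule cancel4)
  have TS: "TDf * SS = X^2 * G4" unfolding TDf_def
    by (metis US mult.assoc mult.right_neutral)
  have "4*((TDf + TAf + KK) * Cf + Cf * TDf) = 4*TDf*(2*Cf) + (2*TAf)*(2*Cf) + 2*KK*(2*Cf)"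
    by (simp add: algebra_simps)
  also have "\<dots> = 4*TDf*(1-SS) + X*(G4-UU)*(1-SS) + 2*(X*UU)*(1-SS)" by (simp add: A2 D2 KK_def)
  also have "\<dots> = 4*TDf - 4*(TDf*SS) + X*(G4 + UU - G4*SS - UU*SS)" by (simp add: algebra_simps)
  also have "\<dots> = 4*TDf - 4*(X^2*G4) + X*(G4 - 1)" by (simp add: GS US TS)
  also have "\<dots> = 4*TDf" by (simp add: G4m1 algebra_simps power2_eq_square)
  finally show "4 * TDf = 4 * ((TDf + TAf + KK) * Cf + Cf * TDf)" ..
qed

lemma conv_trim:
  fixes f g :: "real fps"
  assumes "fps_nth f 0 = 0" "fps_nth g 0 = 0" "n \<ge> 1"
  shows "fps_nth (f * g) n = (\<Sum>k=1..n-1. fps_nth f k * fps_nth g (n-k))"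
proof -
  have "fps_nth (f * g) n = (\<Sum>k=0..n. fps_nth f k * fps_nth g (n-k))" by (rule fps_mult_nth)
  also have "\<dots> = (\<Sum>k\<in>{1..n-1} \<union> {0, n}. fps_nth f k * fps_nth g (n-k))"
    using assms(3) by (intro sum.cong) auto
  also have "\<dots> = (\<Sum>k=1..n-1. fps_nth f k * fps_nth g (n-k)) + (\<Sum>k\<in>{0,n}. fps_nth f k * fps_nth g (n-k))"
    by (rule sum.union_disjoint) auto
  also have "(\<Sum>k\<in>{0,n}. fps_nth f k * fps_nth g (n-k)) = 0"
    using assms by (cases "n = 0") auto
  finally show ?thesis by simp
qed

lemma SS_nth: "fps_nth SS n = real ((2*n) choose n) - (if n = 0 then 0 else 4 * real ((2*(n-1)) choose (n-1)))"
proof -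
  have e: "SS = UU - fps_const 4 * (X * UU)" by (simp add: SS_def algebra_simps numeral_fps_const)
  show ?thesis by (subst e) (simp add: UU_def)
qed

lemma Cf_nth: "fps_nth Cf n = ((if n = 0 then 1 else 0) - fps_nth SS n) / 2"
  by (simp add: Cf_def)

lemma Cf_0: "fps_nth Cf 0 = 0" by (simp add: Cf_nth SS_nth)
lemma Cf_1: "fps_nth Cf 1 = 1" by (simp add: Cf_nth SS_nth)
lemma TAf_0: "fps_nth TAf 0 = 0" by (simp add: TAf_def)
lemma TAf_1: "fps_nth TAf 1 = 0" by (simp add: TAf_def G4_def UU_def)
lemma TDf_0: "fps_nth TDf 0 = 0" by (simp add: TDf_def fps_X_power_mult_nth)
lemma TDf_1: "fps_nth TDf 1 = 0" by (simp add: TDf_def fps_X_power_mult_nth)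
lemma KK_0: "fps_nth KK 0 = 0" by (simp add: KK_def)

lemma KK_nth: "fps_nth KK k = real k * fps_nth Cf k"
proof (cases k)
  case 0 then show ?thesis by (simp add: KK_0)
next
  case (Suc j)
  define c0 where "c0 = real ((2 * j) choose j)"
  define c1 where "c1 = real ((2 * Suc j) choose Suc j)"
  have r: "real (Suc j) * c1 = 2 * (2 * real j + 1) * c0"
    unfolding c0_def c1_def using central_rec[of j] by (metis (mono_tags, lifting) of_nat_1 of_nat_add of_nat_mult of_nat_numeral)
  have s: "fps_nth SS (Suc j) = c1 - 4 * c0" unfolding c0_def c1_def by (simp only: SS_nth) simp
  have "fps_nth Cf (Suc j) = (4 * c0 - c1) / 2"
    by (simp only: Cf_nth s) simp
  then have "real (Suc j) * fps_nth Cf (Suc j) = (4 * real (Suc j) * c0 - real (Suc j) * c1) / 2"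
    by (simp only:) (simp add: field_simps)
  also have "\<dots> = c0" using r by (simp add: algebra_simps)
  finally have "real (Suc j) * fps_nth Cf (Suc j) = c0" .
  moreover have "fps_nth KK (Suc j) = c0" unfolding c0_def KK_def UU_def by simp
  ultimately show ?thesis using Suc by simp
qed

lemma Cf_rec: "n \<ge> 2 \<Longrightarrow> fps_nth Cf n = (\<Sum>k=1..n-1. fps_nth Cf k * fps_nth Cf (n-k))"
proof -
  assume n: "n \<ge> 2"
  have "fps_nth Cf n = fps_nth (X + Cf * Cf) n" using E1 by simp
  also have "\<dots> = fps_nth (Cf * Cf) n" using n by simp
  finally show ?thesis using n by (simp add: conv_trim Cf_0)
qed

lemma TAf_rec: "n \<ge> 2 \<Longrightarrow> fps_nth TAf n = (\<Sum>k=1..n-1. fps_nth TAf k * fps_nth Cf (n-k) + real k * fps_nth Cf k * fps_nth Cf (n-k) + fps_nth Cf k * fps_nth TAf (n-k))"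
proof -
  assume n: "n \<ge> 2"
  have "fps_nth TAf n = fps_nth (TAf * Cf + KK * Cf + Cf * TAf) n" using E2 by simp
  also have "\<dots> = fps_nth (TAf * Cf) n + fps_nth (KK * Cf) n + fps_nth (Cf * TAf) n" by (simp only: fps_add_nth)
  finally show ?thesis using n by (simp add: conv_trim Cf_0 TAf_0 KK_0 KK_nth sum.distrib)
qed

lemma TDf_rec: "n \<ge> 2 \<Longrightarrow> fps_nth TDf n = (\<Sum>k=1..n-1. (fps_nth TDf k + fps_nth TAf k + real k * fps_nth Cf k) * fps_nth Cf (n-k) + fps_nth Cf k * fps_nth TDf (n-k))"
proof -
  assume n: "n \<ge> 2"
  have "fps_nth TDf n = fps_nth ((TDf + TAf + KK) * Cf + Cf * TDf) n" using E3 by simp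
  also have "\<dots> = fps_nth ((TDf + TAf + KK) * Cf) n + fps_nth (Cf * TDf) n" by (simp only: fps_add_nth)
  finally show ?thesis using n by (simp add: conv_trim Cf_0 TAf_0 TDf_0 KK_0 KK_nth sum.distrib)
qed

lemma all_eq: "cN n = fps_nth Cf n \<and> aN n = fps_nth TAf n \<and> dN n = fps_nth TDf n"
proof (induction n rule: less_induct)
  case (less n)
  consider "n = 0" | "n = 1" | "n \<ge> 2" by linarith
  then show ?case
  proof cases
    case 1 then show ?thesis by (simp add: cN_0 aN_0 dN_0 Cf_0 TAf_0 TDf_0)
  next
    case 2 then show ?thesis using cN_1 aN_1 dN_1 Cf_1 TAf_1 TDf_1 by simp
  next
    case 3
    have ih: "k \<in> {1..n-1} \<Longrightarrow> cN k = fps_nth Cf k \<and> aN k = fps_nth TAf k \<and> dN k = fps_nth TDf k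
       \<and> cN (n-k) = fps_nth Cf (n-k) \<and> aN (n-k) = fps_nth TAf (n-k) \<and> dN (n-k) = fps_nth TDf (n-k)" for k
      using less.IH[of k] less.IH[of "n-k"] 3 by auto
    have c: "cN n = fps_nth Cf n"
      unfolding cN_rec[OF 3] Cf_rec[OF 3] by (rule sum.cong[OF refl]) (use ih in auto)
    have a: "aN n = fps_nth TAf n"
      unfolding aN_rec[OF 3] TAf_rec[OF 3] by (rule sum.cong[OF refl]) (use ih in auto)
    have d: "dN n = fps_nth TDf n"
      unfolding dN_rec[OF 3] TDf_rec[OF 3] by (rule sum.cong[OF refl]) (use ih in auto)
    show ?thesis using c a d by simp
  qed
qed

lemma G4_rec: "G4 = 1 + 4 * X * G4"
  by (metis G4m1 add.commute diff_add_cancel)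

lemma GU_nth: "fps_nth (G4 * UU) m = (2 * real m + 1) * real ((2*m) choose m)"
proof (induction m)
  case 0 show ?case by (simp add: G4_def UU_def)
next
  case (Suc m)
  have e: "G4 * UU = UU + fps_const 4 * (X * (G4 * UU))"
    by (subst G4_rec) (simp add: algebra_simps numeral_fps_const)
  define c0 where "c0 = real ((2 * m) choose m)"
  define c1 where "c1 = real ((2 * Suc m) choose Suc m)"
  have r: "real (Suc m) * c1 = 2 * (2 * real m + 1) * c0"
    unfolding c0_def c1_def using central_rec[of m] by (metis (mono_tags, lifting) of_nat_1 of_nat_add of_nat_mult of_nat_numeral)
  have "fps_nth (G4 * UU) (Suc m) = c1 + 4 * fps_nth (G4 * UU) m"
    by (subst e) (simp add: UU_def c1_def)
  also have "\<dots> = c1 + 4 * ((2 * real m + 1) * c0)" using Suc c0_def by simp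
  also have "\<dots> = (2 * real (Suc m) + 1) * c1" using r by (simp add: algebra_simps)
  finally show ?case unfolding c1_def .
qed

lemma TAf_nth: "n \<ge> 1 \<Longrightarrow> fps_nth TAf n = (4^(n-1) - real ((2*(n-1)) choose (n-1))) / 2"
  by (simp add: TAf_def mult.assoc G4_def UU_def)

lemma TDf_nth: "n \<ge> 2 \<Longrightarrow> fps_nth TDf n = (2 * real (n-2) + 1) * real ((2*(n-2)) choose (n-2))"
  by (simp add: TDf_def fps_X_power_mult_nth GU_nth)

lemma dfact_pos: "dfact n > 0"
  by (induction n rule: dfact.induct) auto

lemma dfact_odd: "dfact (2*m+1) = (2*m+1) * dfact (2*m - 1)"
proof (cases m)
  case 0 then show ?thesis by simp
next
  case (Suc k)
  then have "2*m+1 = Suc (Suc (2*k+1))" "2*m - 1 = 2*k+1" by simp_all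
  then show ?thesis by simp
qed

lemma dfact_even: "dfact (2*Suc m) = (2*m+2) * dfact (2*m)"
proof -
  have "2*Suc m = Suc (Suc (2*m))" by simp
  then show ?thesis by simp
qed

lemma central_rec_real: "real (Suc k) * real ((2 * Suc k) choose Suc k) = 2 * (2 * real k + 1) * real ((2 * k) choose k)"
  using central_rec[of k] by (metis (mono_tags, lifting) of_nat_1 of_nat_add of_nat_mult of_nat_numeral)

lemma dfact_C: "real (dfact (2*m)) * real ((2*m) choose m) = 4^m * real (dfact (2*m - 1))"
proof (induction m)
  case 0 then show ?case by simp
next
  case (Suc m)
  define d where "d = real (dfact (2*m))"
  define d' where "d' = real (dfact (2*m - 1))"
  define c0 where "c0 = real ((2 * m) choose m)"
  define c1 where "c1 = real ((2 * Suc m) choose Suc m)"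
  have r: "real (Suc m) * c1 = 2 * (2 * real m + 1) * c0"
    unfolding c0_def c1_def by (rule central_rec_real)
  have ih: "d * c0 = 4^m * d'" using Suc unfolding d_def c0_def d'_def .
  have e1: "real (dfact (2*Suc m)) = (2*real m+2) * d" unfolding d_def by (simp only: dfact_even) (simp add: algebra_simps)
  have e2: "real (dfact (2*Suc m - 1)) = (2*real m+1) * d'"
  proof -
    have "2*Suc m - 1 = 2*m+1" by simp
    then show ?thesis unfolding d'_def by (simp only: dfact_odd) (simp add: algebra_simps)
  qed
  have "real (dfact (2*Suc m)) * c1 = 2 * d * (real (Suc m) * c1)" using e1 by (simp add: algebra_simps)
  also have "\<dots> = 4 * (2 * real m + 1) * (d * c0)" using r by (simp add: algebra_simps)
  also have "\<dots> = 4^(Suc m) * real (dfact (2*Suc m - 1))" using ih e2 by (simp add: algebra_simps)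
  finally show ?case unfolding c1_def .
qed

lemma cpos: "real ((2*m) choose m) > 0"
  by (metis of_nat_0_less_iff zero_less_binomial le_add2 mult_2)

lemma frac_le_help:
  fixes a b c d :: real
  assumes "b > 0" "d > 0" "a * d \<le> c * b"
  shows "a / b \<le> c / d"
  using assms by (simp add: field_simps)

lemma canc: "(b::real) \<noteq> 0 \<Longrightarrow> c \<noteq> 0 \<Longrightarrow> a / b * (b / c) = a / c"
  by (simp add: field_simps)

lemma frac_eq:
  fixes a b c d :: real
  assumes "b > 0" "d > 0" "a * d = c * b"
  shows "a / b = c / d"
  using assms by (simp add: field_simps)

definition qq :: "nat \<Rightarrow> real" where "qq m = 4^m / real ((2*m) choose m)"

lemma qq_dfact: "real (dfact (2*m)) / real (dfact (2*m - 1)) = qq m"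
proof -
  have p1: "real (dfact (2*m - 1)) > 0" using dfact_pos by simp
  have p2: "real ((2*m) choose m) > 0" by (rule cpos)
  show ?thesis using dfact_C[of m] p1 p2 unfolding qq_def by (simp add: field_simps)
qed

lemma qq_Suc: "qq (Suc m) = qq m * (2 * real m + 2) / (2 * real m + 1)"
proof -
  define c0 where "c0 = real ((2 * m) choose m)"
  define c1 where "c1 = real ((2 * Suc m) choose Suc m)"
  have r: "real (Suc m) * c1 = 2 * (2 * real m + 1) * c0"
    unfolding c0_def c1_def by (rule central_rec_real)
  have p0: "c0 > 0" "c1 > 0" unfolding c0_def c1_def by (rule cpos)+
  have "qq (Suc m) = 4^(Suc m) / c1" unfolding qq_def c1_def ..
  also have "\<dots> = 4^m / c0 * (2 * real m + 2) / (2 * real m + 1)"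
  proof -
    have nz: "real m + 1 \<noteq> 0" "2 * real m + 1 \<noteq> 0" by simp_all
    have "(4::real)^(Suc m) * (c0 * (2 * real m + 1)) = 4^m * 2 * (2 * (2 * real m + 1) * c0)"
      by (simp add: algebra_simps)
    also have "\<dots> = 4^m * 2 * (real (Suc m) * c1)" using r by simp
    also have "\<dots> = (4^m * (2 * real m + 2)) * c1" by (simp add: algebra_simps)
    finally have "(4::real)^(Suc m) / c1 = (4^m * (2 * real m + 2)) / (c0 * (2 * real m + 1))"
      using p0 by (intro frac_eq) auto
    then show ?thesis by simp
  qed
  finally show ?thesis unfolding qq_def c0_def .
qed

lemma qq_pos: "qq m > 0" by (simp add: qq_def)

definition WW :: "nat \<Rightarrow> real" where "WW m = (\<Prod>k=1..m. (4*real k^2) / (4*real k^2 - 1))"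

lemma WW_qq: "WW m = qq m ^ 2 / (2 * real m + 1)"
proof (induction m)
  case 0 then show ?case by (simp add: WW_def qq_def)
next
  case (Suc m)
  have "WW (Suc m) = WW m * ((4*real (Suc m)^2) / (4*real (Suc m)^2 - 1))"
    unfolding WW_def by (simp add: prod.nat_ivl_Suc' mult.commute)
  also have "\<dots> = qq (Suc m) ^ 2 / (2 * real (Suc m) + 1)"
    unfolding Suc qq_Suc by (simp add: field_simps power2_eq_square)
  finally show ?case .
qed

lemma WW_lim: "WW \<longlonglongrightarrow> pi / 2"
  unfolding WW_def by (rule wallis)

lemma WW_mono: "incseq WW"
proof (rule incseq_SucI)
  fix m
  have f0: "4*real (Suc m)^2 - 1 > 0"
  proof -
    have "real (Suc m)^2 \<ge> 1" by simp
    then show ?thesis by linarith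
  qed
  have f: "(4*real (Suc m)^2) / (4*real (Suc m)^2 - 1) \<ge> 1"
    using f0 by (simp add: le_divide_eq)
  have "WW m \<ge> 0" unfolding WW_qq by simp
  then have "WW m * 1 \<le> WW m * ((4*real (Suc m)^2) / (4*real (Suc m)^2 - 1))"
    using f by (intro mult_left_mono) auto
  also have "\<dots> = WW (Suc m)" unfolding WW_def by (simp add: prod.nat_ivl_Suc' mult.commute)
  finally show "WW m \<le> WW (Suc m)" by simp
qed

lemma qq_upper: "qq m ^ 2 \<le> pi * (real m + 1/2)"
proof -
  have "WW m \<le> pi / 2" by (rule incseq_le[OF WW_mono WW_lim])
  then show ?thesis unfolding WW_qq by (simp add: field_simps)
qed

definition ZZ :: "nat \<Rightarrow> real" where "ZZ j = qq (Suc j) ^ 2 / real (Suc j)"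

lemma ZZ_mono: "decseq ZZ"
proof (rule decseq_SucI)
  fix j
  have "ZZ (Suc j) = qq (Suc j) ^ 2 * ((2 * real j + 4)^2 / ((2 * real j + 3)^2 * (real j + 2)))"
    unfolding ZZ_def by (subst qq_Suc) (simp add: field_simps power2_eq_square)
  also have "\<dots> \<le> qq (Suc j) ^ 2 * (1 / (real j + 1))"
  proof (rule mult_left_mono)
    show "(2 * real j + 4)^2 / ((2 * real j + 3)^2 * (real j + 2)) \<le> 1 / (real j + 1)"
    proof (rule frac_le_help)
      show "(2 * real j + 4)^2 * (real j + 1) \<le> 1 * ((2 * real j + 3)^2 * (real j + 2))"
        by (simp add: power2_eq_square algebra_simps)
    qed auto
  qed simp
  also have "\<dots> = ZZ j" unfolding ZZ_def by (simp add: field_simps)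
  finally show "ZZ (Suc j) \<le> ZZ j" .
qed

lemma ZZ_lim: "ZZ \<longlonglongrightarrow> pi"
proof -
  have eq: "ZZ j = WW (Suc j) * (2 + inverse (real (Suc j)))" for j
  proof -
    have nz: "2 * real j + 3 \<noteq> 0" "real (Suc j) \<noteq> 0" by simp_all
    have "2 + inverse (real (Suc j)) = (2 * real (Suc j) + 1) / real (Suc j)"
      using nz by (simp add: field_simps)
    then have "WW (Suc j) * (2 + inverse (real (Suc j))) = qq (Suc j)^2 / (2 * real (Suc j) + 1) * ((2 * real (Suc j) + 1) / real (Suc j))"
      unfolding WW_qq by simp
    also have "\<dots> = qq (Suc j)^2 / real (Suc j)"
      by (rule canc) simp_all
    finally show ?thesis unfolding ZZ_def by simp
  qed
  have "(\<lambda>j. WW (Suc j)) \<longlonglongrightarrow> pi / 2" using WW_lim by (rule LIMSEQ_Suc)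
  moreover have "(\<lambda>j. 2 + inverse (real (Suc j))) \<longlonglongrightarrow> 2 + 0"
    by (intro tendsto_intros LIMSEQ_inverse_real_of_nat)
  ultimately have "(\<lambda>j. WW (Suc j) * (2 + inverse (real (Suc j)))) \<longlonglongrightarrow> pi / 2 * (2 + 0)"
    by (rule tendsto_mult)
  then show ?thesis unfolding eq by simp
qed

lemma qq_lower: "m \<ge> 1 \<Longrightarrow> pi * real m \<le> qq m ^ 2"
proof -
  assume "m \<ge> 1"
  then obtain j where j: "m = Suc j" by (cases m) auto
  have "pi \<le> ZZ j" by (rule decseq_ge[OF ZZ_mono ZZ_lim])
  then show ?thesis unfolding ZZ_def j by (simp add: field_simps)
qed

lemma key_bound:
  fixes m q :: real
  assumes m: "m \<ge> 2" and lo: "pi * m \<le> q^2" and up: "q^2 \<le> pi * (m + 1/2)" and q0: "q \<ge> 0"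
  shows "\<bar>m / (q - 1) - sqrt ((m + 1) / pi) - 1 / pi\<bar> \<le> 4 / sqrt (m + 1)"
proof -
  have pi3: "pi > 3" by (rule pi_gt3)
  have pi4: "pi < 4" by (rule pi_less_4)
  define s where "s = sqrt (pi * m)"
  have s2: "s^2 = pi * m" unfolding s_def using m pi3 by simp
  have s_ge: "s \<ge> 2"
  proof -
    have "3 * 2 \<le> pi * m" using pi3 m by (intro mult_mono) auto
    then have "4 \<le> pi * m" by linarith
    then have "sqrt 4 \<le> s" unfolding s_def by (rule real_sqrt_le_mono)
    then show ?thesis by simp
  qed
  have qs: "s \<le> q"
  proof -
    have "s \<le> sqrt (q^2)" unfolding s_def using lo by (rule real_sqrt_le_mono)
    then show ?thesis using q0 by simp
  qed
  define e where "e = q - s"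
  have e0: "e \<ge> 0" using qs e_def by simp
  have es: "e * s \<le> pi / 4"
  proof -
    have "e * (q + s) = q^2 - s^2" unfolding e_def by (simp add: power2_eq_square algebra_simps)
    also have "\<dots> \<le> pi / 2" using up s2 by (simp add: algebra_simps)
    finally have "e * (q + s) \<le> pi / 2" .
    moreover have "e * (2 * s) \<le> e * (q + s)" using e0 qs by (intro mult_left_mono) auto
    ultimately show ?thesis by simp
  qed
  have e_le: "e \<le> pi / 8"
  proof -
    have "e * 2 \<le> e * s" using e0 s_ge by (intro mult_left_mono) auto
    then show ?thesis using es by simp
  qed
  define num where "num = 1 - e * (s + 1)"
  have num_b: "\<bar>num\<bar> \<le> 3"
  proof -
    have "e * (s + 1) = e * s + e" by (simp add: algebra_simps)
    then have "0 \<le> e * (s + 1)" "e * (s + 1) \<le> pi / 4 + pi / 8" using es e_le e0 s_ge by auto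
    then show ?thesis unfolding num_def using pi4 by (simp add: abs_le_iff)
  qed
  have q1: "q - 1 \<ge> s / 2" using qs s_ge by simp
  have q1p: "q - 1 > 0" using q1 s_ge by simp
  have sqm: "sqrt (m / pi) = s / pi"
  proof -
    have "m / pi = (pi * m) / pi^2" using pi3 by (simp add: power2_eq_square)
    then have "sqrt (m / pi) = sqrt (pi * m) / sqrt (pi^2)" by (simp add: real_sqrt_divide)
    then show ?thesis unfolding s_def using pi3 by simp
  qed
  have ident: "m / (q - 1) - sqrt (m / pi) - 1 / pi = num / (pi * (q - 1))"
  proof -
    have "m / (q - 1) - s / pi - 1 / pi = (pi * m - (s + 1) * (q - 1)) / (pi * (q - 1))"
      using q1p pi3 by (simp add: field_simps)
    also have "pi * m - (s + 1) * (q - 1) = s^2 - (s + 1) * ((s + e) - 1)"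
      using s2 e_def by simp
    also have "\<dots> = num" unfolding num_def by (simp add: power2_eq_square algebra_simps)
    finally show ?thesis unfolding sqm .
  qed
  have E1: "\<bar>m / (q - 1) - sqrt (m / pi) - 1 / pi\<bar> \<le> 2 / sqrt (m + 1)"
  proof -
    have "\<bar>num / (pi * (q - 1))\<bar> = \<bar>num\<bar> / (pi * (q - 1))" using q1p pi3 by (simp add: abs_divide)
    also have "\<dots> \<le> 3 / (pi * (s / 2))"
      using num_b q1 q1p pi3 s_ge by (intro frac_le) (auto intro: mult_left_mono)
    also have "\<dots> \<le> 2 / s" using pi3 s_ge by (simp add: field_simps)
    also have "\<dots> \<le> 2 / sqrt (m + 1)"
    proof -
      have "3 * m \<le> pi * m" using pi3 m by (intro mult_right_mono) auto
      then have "m + 1 \<le> pi * m" using m by linarith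
      then have "sqrt (m + 1) \<le> s" unfolding s_def by (rule real_sqrt_le_mono)
      moreover have "sqrt (m + 1) > 0" using m by simp
      ultimately show ?thesis by (simp add: frac_le)
    qed
    finally show ?thesis unfolding ident .
  qed
  define a where "a = sqrt ((m + 1) / pi)"
  define b where "b = sqrt (m / pi)"
  have ab: "0 \<le> b" "b \<le> a" unfolding a_def b_def using m pi3 by (auto intro: real_sqrt_le_mono divide_right_mono)
  have a_pos: "a > 0" unfolding a_def using m pi3 by simp
  have D: "a - b \<le> 1 / sqrt (m + 1)"
  proof -
    have "(a - b) * (a + b) = a^2 - b^2" by (simp add: power2_eq_square algebra_simps)
    also have "\<dots> = 1 / pi" unfolding a_def b_def using m pi3 by (simp add: field_simps)
    finally have "(a - b) * (a + b) = 1 / pi" .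
    moreover have "(a - b) * a \<le> (a - b) * (a + b)" using ab by (intro mult_left_mono) auto
    ultimately have "(a - b) * a \<le> 1 / pi" by simp
    then have "a - b \<le> 1 / (pi * a)" using a_pos pi3 by (simp add: field_simps)
    also have "pi * a = sqrt pi * sqrt (m + 1)"
    proof -
      have "a * sqrt pi = sqrt (m + 1)" unfolding a_def using pi3 by (simp add: real_sqrt_divide)
      have h: "sqrt pi * sqrt pi = pi" using pi3 by simp
      have "sqrt pi * (a * sqrt pi) = a * (sqrt pi * sqrt pi)" by (simp only: mult_ac)
      also have "\<dots> = pi * a" using h by simp
      finally show ?thesis using \<open>a * sqrt pi = sqrt (m + 1)\<close> by simp
    qed
    also have "1 / (sqrt pi * sqrt (m + 1)) \<le> 1 / sqrt (m + 1)"
    proof -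
      have "sqrt pi \<ge> 1" using pi3 by simp
      moreover have "sqrt (m + 1) > 0" using m by simp
      ultimately show ?thesis by (simp add: field_simps)
    qed
    finally show ?thesis .
  qed
  have "\<bar>m / (q - 1) - sqrt ((m + 1) / pi) - 1 / pi\<bar> = \<bar>(m / (q - 1) - b - 1 / pi) - (a - b)\<bar>"
    unfolding a_def by simp
  also have "\<dots> \<le> \<bar>m / (q - 1) - b - 1 / pi\<bar> + (a - b)" using ab by linarith
  also have "\<dots> \<le> 2 / sqrt (m + 1) + 1 / sqrt (m + 1)" using E1 D unfolding b_def by linarith
  also have "\<dots> \<le> 4 / sqrt (m + 1)" using m by (simp add: divide_simps)
  finally show ?thesis .
qed

declare binomial_Suc_Suc[simp del]

lemma choose2_real: "real (n choose 2) = real n * (real n - 1) / 2"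
proof (induction n)
  case 0 then show ?case by simp
next
  case (Suc n)
  have "(Suc n) choose 2 = (n choose 1) + (n choose 2)"
    using binomial_Suc_Suc[of n 1] by (simp add: numeral_2_eq_2)
  then have "real ((Suc n) choose 2) = real n + real (n choose 2)" by simp
  then show ?case using Suc by (simp add: field_simps)
qed

lemma part_pairs: "n \<ge> 2 \<Longrightarrow> real (total_pairs n) = (4 ^ (n - 1) - real ((2 * n - 2) choose (n - 1))) / 2"
proof -
  assume n: "n \<ge> 2"
  have "real (total_pairs n) = fps_nth TAf n" using total_pairs_eq all_eq by simp
  also have "\<dots> = (4^(n-1) - real ((2*(n-1)) choose (n-1))) / 2" using n by (simp add: TAf_nth)
  also have "2*(n-1) = 2*n-2" by simp
  finally show ?thesis .
qed

lemma part_dist: "n \<ge> 2 \<Longrightarrow> real (total_dist n) = (2 * real (n-2) + 1) * real ((2*(n-2)) choose (n-2))"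
  using total_dist_eq all_eq TDf_nth by simp

lemma part_fact: "n \<ge> 2 \<Longrightarrow> real (total_dist n) = fact (2 * n - 3) / (fact (n - 2))\<^sup>2"
proof -
  assume n: "n \<ge> 2"
  define j where "j = n - 2"
  have e: "2 * n - 3 = Suc (2 * j)" using n j_def by simp
  have c: "real ((2*j) choose j) = fact (2*j) / (fact j * fact j)"
    using binomial_fact[of j "2*j"] by simp
  have "real (total_dist n) = (2 * real j + 1) * (fact (2*j) / (fact j * fact j))"
    using part_dist[OF n] c j_def by simp
  also have "\<dots> = fact (Suc (2*j)) / (fact j)^2" by (simp add: power2_eq_square algebra_simps)
  finally show ?thesis using e j_def by simp
qed

lemma part_cat: "n \<ge> 2 \<Longrightarrow> real (total_dist n) = real (n choose 2) * catalan (n - 1)"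
proof -
  assume n: "n \<ge> 2"
  define j where "j = n - 2"
  have nj: "n = Suc (Suc j)" using n j_def by simp
  have r: "real (Suc j) * real ((2 * Suc j) choose Suc j) = 2 * (2 * real j + 1) * real ((2 * j) choose j)"
    by (rule central_rec_real)
  have h1: "n - 1 = Suc j" using nj by simp
  have h2: "Suc j + 1 = Suc (Suc j)" by simp
  have h3: "real n * (real n - 1) / 2 = real (Suc (Suc j)) * real (Suc j) / 2" using nj by simp
  have "real (n choose 2) * catalan (n - 1) = real (Suc (Suc j)) * real (Suc j) / 2 * (real ((2 * Suc j) choose Suc j) / real (Suc (Suc j)))"
    unfolding catalan_def choose2_real h1 h2 h3 ..
  also have "\<dots> = real (Suc j) * real ((2 * Suc j) choose Suc j) / 2"
    by (simp del: of_nat_Suc)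
  also have "\<dots> = (2 * real j + 1) * real ((2 * j) choose j)" using r by simp
  also have "\<dots> = real (total_dist n)" using part_dist[OF n] j_def by simp
  finally show ?thesis ..
qed

lemma expected_eq: "n \<ge> 2 \<Longrightarrow> expected_len n = real (n - 1) / (qq (n - 1) - 1)"
proof -
  assume n: "n \<ge> 2"
  define m where "m = n - 1"
  have nm: "n = Suc m" "m \<ge> 1" using n m_def by auto
  define C where "C = real ((2*m) choose m)"
  have Cp: "C > 0" unfolding C_def by (rule cpos)
  have r: "real m * C = 2 * (2 * real (n - 2) + 1) * real ((2*(n-2)) choose (n-2))"
  proof -
    obtain j where j: "m = Suc j" using nm by (cases m) auto
    have "n - 2 = j" using nm j by simp
    then show ?thesis unfolding C_def j by (simp only: central_rec_real)
  qed
  have h1: "n - 1 = m" "2 * n - 2 = 2 * m" using nm by auto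
  have tp: "real (total_pairs n) = (4^m - C) / 2"
    using part_pairs[OF n] unfolding h1 C_def .
  have td: "real (total_dist n) = real m * C / 2" using part_dist[OF n] r by simp
  have half: "(x::real) / 2 / (y / 2) = x / y" for x y by (cases "y = 0") (simp_all add: field_simps)
  have "expected_len n = (real m * C / 2) / ((4^m - C) / 2)" unfolding expected_len_def tp td ..
  also have "\<dots> = real m * C / (4^m - C)" by (rule half)
  also have "\<dots> = real m / ((4^m - C) / C)" by (simp only: divide_divide_eq_right)
  also have "(4^m - C) / C = qq m - 1"
  proof -
    have "(4^m - C) / C = 4^m / C - C / C" by (rule diff_divide_distrib)
    also have "C / C = 1" using Cp by simp
    finally show ?thesis unfolding qq_def C_def .
  qed
  finally show ?thesis unfolding m_def .
qed

lemma part_exp: "n \<ge> 2 \<Longrightarrow> expected_len n = real (n - 1) / (real (dfact (2 * n - 2)) / real (dfact (2 * n - 3)) - 1)"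
proof -
  assume n: "n \<ge> 2"
  have "2 * n - 2 = 2 * (n - 1)" "2 * n - 3 = 2 * (n - 1) - 1" using n by auto
  then have "real (dfact (2 * n - 2)) / real (dfact (2 * n - 3)) = qq (n - 1)" using qq_dfact by simp
  then show ?thesis using expected_eq[OF n] by simp
qed

lemma asymp: "(\<lambda>n. expected_len n - sqrt (real n / pi) - 1 / pi) \<in> O(\<lambda>n. 1 / sqrt (real n))"
proof (rule bigoI)
  show "eventually (\<lambda>n. norm (expected_len n - sqrt (real n / pi) - 1 / pi) \<le> 4 * norm (1 / sqrt (real n))) at_top"
    unfolding eventually_at_top_linorder
  proof (intro exI allI impI)
    fix n :: nat assume n: "n \<ge> 3"
    define m where "m = n - 1"
    have nm: "real n = real m + 1" "m \<ge> 2" using n m_def by auto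
    have b: "\<bar>real m / (qq m - 1) - sqrt ((real m + 1) / pi) - 1 / pi\<bar> \<le> 4 / sqrt (real m + 1)"
    proof (rule key_bound)
      show "2 \<le> real m" using nm by simp
      show "pi * real m \<le> (qq m)\<^sup>2" using qq_lower nm by simp
      show "(qq m)\<^sup>2 \<le> pi * (real m + 1 / 2)" by (rule qq_upper)
      show "0 \<le> qq m" using qq_pos less_imp_le by blast
    qed
    have "expected_len n = real m / (qq m - 1)" using expected_eq[of n] n m_def by simp
    then show "norm (expected_len n - sqrt (real n / pi) - 1 / pi) \<le> 4 * norm (1 / sqrt (real n))"
      using b nm by simp
  qed
qed

theorem mainTheorem8:
  shows "(\<forall>n::nat. n \<ge> 2 \<longrightarrow>
            real (total_pairs n) = (4 ^ (n - 1) - real ((2 * n - 2) choose (n - 1))) / 2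
          \<and> real (total_dist n) = fact (2 * n - 3) / (fact (n - 2))\<^sup>2
          \<and> real (total_dist n) = real (n choose 2) * catalan (n - 1)
          \<and> expected_len n = real (n - 1) / (real (dfact (2 * n - 2)) / real (dfact (2 * n - 3)) - 1))
       \<and> (\<lambda>n. expected_len n - sqrt (real n / pi) - 1 / pi) \<in> O(\<lambda>n. 1 / sqrt (real n))"
  apply (intro conjI allI impI)
      apply (erule part_pairs)
     apply (erule part_fact)
    apply (erule part_cat)
   apply (erule part_exp)
  apply (rule asymp)
  done

end
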